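(* Let $X\in\mathbb{R}^{m\times n}$ be fixed with rows $x^\alpha$, let $W^{\mathrm{pre}},W^{\mathrm{post}}\in\mathbb{R}^{n\times n}$ have i.i.d. $\mathcal N(0,1)$ entries, and define $$\mathcal T_1^{\alpha\beta}=\frac{c\sqrt c}{n\sqrt n}\sum_{i,j}W^{\mathrm{post}}_{ji}\Big(x^\alpha_i\sigma_s\Big(\sum_{j'}x^\beta_{j'}W^{\mathrm{pre}}_{j'j}\Big)+x^\beta_i\sigma_s\Big(\sum_{j'}x^\alpha_{j'}W^{\mathrm{pre}}_{j'j}\Big)\Big),$$ $$\mathcal T_2^{\delta\omega}=\frac{c^2}{n^2\sqrt n}\sum_{i,j,j'}W^{\mathrm{post}}_{ji}W^{\mathrm{post}}_{j'i}\sigma_s\Big(\sum_kx^\delta_kW^{\mathrm{pre}}_{kj}\Big)\sigma_s\Big(\sum_{k'}x^\omega_{k'}W^{\mathrm{pre}}_{k'j'}\Big).$$ Then $\mathbb{E}[\mathcal T_1^{\alpha\beta}\mathcal T_2^{\delta\omega}]=0$ for all tokens $\alpha,\beta,\delta,\omega$, where the expectation is over the weights.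
   Context: $\sigma_s(x)=s_+\max(x,0)+s_-\min(x,0)$ with $s_\pm=1+c_\pm n^{-1/2}$ for constants $c_\pm\in\mathbb{R}$; $c^{-1}=\mathbb{E}\sigma_s(g)^2$ for $g\sim\mathcal N(0,1)$. *)

theory Defs
  imports "HOL-Probability.Probability"
begin

definition std_gauss :: "real measure" where
  "std_gauss = density lborel std_normal_density"

text \<open>Law of an n x n matrix with i.i.d. N(0,1) entries (entries indexed by (row, column)).\<close>
definition gauss_mat :: "nat \<Rightarrow> (nat \<times> nat \<Rightarrow> real) measure" where
  "gauss_mat n = PiM ({..<n} \<times> {..<n}) (\<lambda>_. std_gauss)"

definition weights :: "nat \<Rightarrow> ((nat \<times> nat \<Rightarrow> real) \<times> (nat \<times> nat \<Rightarrow> real)) measure" where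
  "weights n = gauss_mat n \<Otimes>\<^sub>M gauss_mat n"

definition s_plus :: "real \<Rightarrow> nat \<Rightarrow> real" where
  "s_plus cp n = 1 + cp / sqrt (real n)"
definition s_minus :: "real \<Rightarrow> nat \<Rightarrow> real" where
  "s_minus cm n = 1 + cm / sqrt (real n)"

definition sigma_s :: "real \<Rightarrow> real \<Rightarrow> nat \<Rightarrow> real \<Rightarrow> real" where
  "sigma_s cp cm n x = s_plus cp n * max x 0 + s_minus cm n * min x 0"

definition c_const :: "real \<Rightarrow> real \<Rightarrow> nat \<Rightarrow> real" where
  "c_const cp cm n = 1 / (\<integral>g. (sigma_s cp cm n g)\<^sup>2 \<partial>std_gauss)"

text \<open>T_1^{ab}; X a b = x^a_b (row a of X), Wpre (j',j) = W^pre_{j'j}.\<close>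
definition T1 :: "real \<Rightarrow> real \<Rightarrow> nat \<Rightarrow> (nat \<Rightarrow> nat \<Rightarrow> real) \<Rightarrow> nat \<Rightarrow> nat
    \<Rightarrow> (nat \<times> nat \<Rightarrow> real) \<Rightarrow> (nat \<times> nat \<Rightarrow> real) \<Rightarrow> real" where
  "T1 cp cm n X a b Wpre Wpost =
     (let c = c_const cp cm n in
      c * sqrt c / (real n * sqrt (real n)) *
      (\<Sum>i<n. \<Sum>j<n. Wpost (j, i) *
         (X a i * sigma_s cp cm n (\<Sum>j'<n. X b j' * Wpre (j', j))
          + X b i * sigma_s cp cm n (\<Sum>j'<n. X a j' * Wpre (j', j)))))"

definition T2 :: "real \<Rightarrow> real \<Rightarrow> nat \<Rightarrow> (nat \<Rightarrow> nat \<Rightarrow> real) \<Rightarrow> nat \<Rightarrow> nat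
    \<Rightarrow> (nat \<times> nat \<Rightarrow> real) \<Rightarrow> (nat \<times> nat \<Rightarrow> real) \<Rightarrow> real" where
  "T2 cp cm n X d w Wpre Wpost =
     (let c = c_const cp cm n in
      c\<^sup>2 / ((real n)\<^sup>2 * sqrt (real n)) *
      (\<Sum>i<n. \<Sum>j<n. \<Sum>j'<n. Wpost (j, i) * Wpost (j', i) *
         sigma_s cp cm n (\<Sum>k<n. X d k * Wpre (k, j)) *
         sigma_s cp cm n (\<Sum>k'<n. X w k' * Wpre (k', j'))))"

end

theory Submission
  imports Defs
begin


lemma prob_gauss: "prob_space std_gauss"
  unfolding std_gauss_def using prob_space_normal_density[of 1 0] by simp

lemma sets_gauss[measurable_cong, simp]: "sets std_gauss = sets borel"
  unfolding std_gauss_def by simp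

lemma space_gauss[simp]: "space std_gauss = UNIV"
  unfolding std_gauss_def by simp

lemma gauss_moment6: "integrable std_gauss (\<lambda>x. x ^ 6)"
proof -
  have "integrable lborel (\<lambda>x. std_normal_density x * x ^ (2*3))"
    using std_normal_moment_even[of 3] by (blast intro: integrable.intros)
  then show ?thesis unfolding std_gauss_def
    by (subst integrable_density) (auto simp: normal_density_nonneg)
qed

lemma prob_gm: "prob_space (gauss_mat n)"
  unfolding gauss_mat_def by (intro prob_space_PiM prob_gauss)

lemma prob_weights: "prob_space (weights n)"
  unfolding weights_def by (intro prob_space_pair prob_gm)

lemma distr_pair_snd':
  assumes "prob_space N" "prob_space M"
  shows "distr (N \<Otimes>\<^sub>M M) M snd = M"
proof (intro measure_eqI)
  interpret N: prob_space N by fact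
  interpret M: prob_space M by fact
  interpret P: pair_prob_space N M ..
  fix A assume A: "A \<in> sets (distr (N \<Otimes>\<^sub>M M) M snd)"
  from A have "emeasure (distr (N \<Otimes>\<^sub>M M) M snd) A = emeasure (N \<Otimes>\<^sub>M M) (space N \<times> A)"
    by (auto simp add: emeasure_distr space_pair_measure dest: sets.sets_into_space intro!: arg_cong2[where f=emeasure])
  moreover have "A \<in> sets M" using A by simp
  ultimately show "emeasure (distr (N \<Otimes>\<^sub>M M) M snd) A = emeasure M A"
    using M.emeasure_pair_measure_Times[OF sets.top[of N], of A] by (simp add: N.emeasure_space_1)
qed simp

lemma gm_component:
  assumes "e \<in> {..<n} \<times> {..<n}"
  shows "integrable (gauss_mat n) (\<lambda>W. (W e) ^ 6)"
proof -
  have "distr (gauss_mat n) std_gauss (\<lambda>\<omega>. \<omega> e) = std_gauss"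
    unfolding gauss_mat_def using assms by (intro distr_PiM_component prob_gauss) 
  then have "integrable (distr (gauss_mat n) std_gauss (\<lambda>\<omega>. \<omega> e)) (\<lambda>x. x^6)"
    using gauss_moment6 by simp
  then show ?thesis
    by (subst (asm) integrable_distr_eq) (use assms in \<open>auto simp: gauss_mat_def\<close>)
qed

lemma w_fst:
  assumes "e \<in> {..<n} \<times> {..<n}"
  shows "integrable (weights n) (\<lambda>W. (fst W e) ^ 6)"
proof -
  interpret prob_space "gauss_mat n" by (rule prob_gm)
  have "integrable (distr (weights n) (gauss_mat n) fst) (\<lambda>W. (W e) ^ 6)"
    unfolding weights_def distr_pair_fst using gm_component[OF assms] .
  then show ?thesis
    by (subst (asm) integrable_distr_eq) (use assms in \<open>auto simp: weights_def gauss_mat_def\<close>)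
qed

lemma w_snd:
  assumes "e \<in> {..<n} \<times> {..<n}"
  shows "integrable (weights n) (\<lambda>W. (snd W e) ^ 6)"
proof -
  have "integrable (distr (weights n) (gauss_mat n) snd) (\<lambda>W. (W e) ^ 6)"
    unfolding weights_def distr_pair_snd'[OF prob_gm prob_gm] using gm_component[OF assms] .
  then show ?thesis
    by (subst (asm) integrable_distr_eq) (use assms in \<open>auto simp: weights_def gauss_mat_def\<close>)
qed



lemma gauss_sym: "distr std_gauss std_gauss uminus = std_gauss"
proof (rule measure_eqI)
  fix A assume "A \<in> sets (distr std_gauss std_gauss uminus)"
  then have A[measurable]: "A \<in> sets borel" by simp
  have "(uminus::real\<Rightarrow>real) -` A \<inter> space borel \<in> sets borel"
    by (rule measurable_sets[OF _ A]) measurable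
  then have B: "(uminus::real\<Rightarrow>real) -` A \<in> sets borel" by simp
  have "emeasure (distr std_gauss std_gauss uminus) A = emeasure std_gauss (uminus -` A)"
    by (subst emeasure_distr) auto
  also have "\<dots> = (\<integral>\<^sup>+x. ennreal (std_normal_density x) * indicator (uminus -` A) x \<partial>lborel)"
    unfolding std_gauss_def using B by (subst emeasure_density) auto
  also have "\<dots> = (\<integral>\<^sup>+x. (\<lambda>y. ennreal (std_normal_density y) * indicator A y) (-x) \<partial>lborel)"
    by (intro nn_integral_cong) (auto simp: normal_density_def indicator_def)
  also have "\<dots> = (\<integral>\<^sup>+y. ennreal (std_normal_density y) * indicator A y \<partial>distr lborel borel uminus)"
    by (subst nn_integral_distr) auto
  also have "\<dots> = emeasure std_gauss A"
    unfolding lborel_distr_uminus std_gauss_def by (subst emeasure_density) auto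
  finally show "emeasure (distr std_gauss std_gauss uminus) A = emeasure std_gauss A" .
qed simp

definition negI :: "nat \<Rightarrow> (nat \<times> nat \<Rightarrow> real) \<Rightarrow> (nat \<times> nat \<Rightarrow> real)" where
  "negI n = compose ({..<n} \<times> {..<n}) uminus"

lemma negI_meas[measurable]: "negI n \<in> measurable (gauss_mat n) (gauss_mat n)"
  unfolding negI_def gauss_mat_def compose_def by measurable

lemma gm_sym: "distr (gauss_mat n) (gauss_mat n) (negI n) = gauss_mat n"
proof -
  have "distr (gauss_mat n) (gauss_mat n) (negI n) =
        PiM ({..<n} \<times> {..<n}) (\<lambda>_. distr std_gauss std_gauss uminus)"
    unfolding negI_def gauss_mat_def
    by (rule distr_PiM_finite_prob_space') (auto intro: prob_gauss)
  then show ?thesis unfolding gauss_sym gauss_mat_def .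
qed

definition sigW where "sigW n = (\<lambda>(x::nat \<times> nat \<Rightarrow> real, y). (x, negI n y))"

lemma sigW_meas[measurable]: "sigW n \<in> measurable (weights n) (weights n)"
  unfolding sigW_def weights_def by measurable

lemma weights_sym: "distr (weights n) (weights n) (sigW n) = weights n"
proof -
  interpret prob_space "gauss_mat n" by (rule prob_gm)
  have "distr (gauss_mat n) (gauss_mat n) (\<lambda>x. x) \<Otimes>\<^sub>M distr (gauss_mat n) (gauss_mat n) (negI n)
     = distr (weights n) (weights n) (sigW n)"
    unfolding weights_def sigW_def
    by (rule pair_measure_distr) (auto simp: gm_sym intro: prob_space_imp_sigma_finite prob_gm)
  then show ?thesis by (simp add: gm_sym distr_id2 weights_def)
qed



definition Ks :: "real \<Rightarrow> real \<Rightarrow> nat \<Rightarrow> real" where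
  "Ks cp cm n = \<bar>s_plus cp n\<bar> + \<bar>s_minus cm n\<bar>"

definition Xs :: "(nat \<Rightarrow> nat \<Rightarrow> real) \<Rightarrow> nat \<Rightarrow> nat \<Rightarrow> real" where
  "Xs X n b = (\<Sum>k<n. \<bar>X b k\<bar>)"

lemma Ks_nonneg: "Ks cp cm n \<ge> 0" unfolding Ks_def by simp
lemma Xs_nonneg: "Xs X n b \<ge> 0" unfolding Xs_def by (simp add: sum_nonneg)

lemma sigma_bound: "\<bar>sigma_s cp cm n x\<bar> \<le> Ks cp cm n * \<bar>x\<bar>"
  unfolding sigma_s_def Ks_def
  by (cases "x \<ge> 0") (auto simp: abs_mult max_def min_def algebra_simps mult_le_0_iff)

lemma lin_bound:
  assumes "\<And>k. k < n \<Longrightarrow> \<bar>W (k, j)\<bar> \<le> r"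
  shows "\<bar>\<Sum>k<n. X b k * W (k, j)\<bar> \<le> Xs X n b * r"
proof -
  have "\<bar>\<Sum>k<n. X b k * W (k, j)\<bar> \<le> (\<Sum>k<n. \<bar>X b k * W (k, j)\<bar>)" by (rule sum_abs)
  also have "\<dots> \<le> (\<Sum>k<n. \<bar>X b k\<bar> * r)"
    by (intro sum_mono) (auto simp: abs_mult intro: mult_left_mono assms)
  also have "\<dots> = Xs X n b * r" by (simp add: Xs_def sum_distrib_right)
  finally show ?thesis .
qed

lemma sig_lin_bound:
  assumes "\<And>k. k < n \<Longrightarrow> \<bar>W (k, j)\<bar> \<le> r"
  shows "\<bar>sigma_s cp cm n (\<Sum>k<n. X b k * W (k, j))\<bar> \<le> Ks cp cm n * Xs X n b * r"
proof -
  have "\<bar>sigma_s cp cm n (\<Sum>k<n. X b k * W (k, j))\<bar> \<le> Ks cp cm n * \<bar>\<Sum>k<n. X b k * W (k, j)\<bar>"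
    by (rule sigma_bound)
  also have "\<dots> \<le> Ks cp cm n * (Xs X n b * r)"
    by (intro mult_left_mono lin_bound assms Ks_nonneg)
  finally show ?thesis by (simp add: mult.assoc)
qed

lemma abs_sum2: "\<bar>\<Sum>i\<in>A. \<Sum>j\<in>B. f i j :: real\<bar> \<le> (\<Sum>i\<in>A. \<Sum>j\<in>B. \<bar>f i j\<bar>)"
  by (rule order_trans[OF sum_abs]) (intro sum_mono sum_abs)

lemma abs_sum3: "\<bar>\<Sum>i\<in>A. \<Sum>j\<in>B. \<Sum>k\<in>C. f i j k :: real\<bar> \<le> (\<Sum>i\<in>A. \<Sum>j\<in>B. \<Sum>k\<in>C. \<bar>f i j k\<bar>)"
  by (rule order_trans[OF sum_abs]) (intro sum_mono abs_sum2)

definition A1 where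
  "A1 cp cm n X a b = \<bar>c_const cp cm n * sqrt (c_const cp cm n) / (real n * sqrt (real n))\<bar> *
     (\<Sum>i<n. \<Sum>j<(n::nat). \<bar>X a i\<bar> * (Ks cp cm n * Xs X n b) + \<bar>X b i\<bar> * (Ks cp cm n * Xs X n a))"

definition A2 where
  "A2 cp cm n X d w = \<bar>(c_const cp cm n)\<^sup>2 / ((real n)\<^sup>2 * sqrt (real n))\<bar> *
     (\<Sum>i<n. \<Sum>j<(n::nat). \<Sum>j'<(n::nat). (Ks cp cm n * Xs X n d) * (Ks cp cm n * Xs X n w))"

lemma T1_bound:
  assumes "\<And>e. e \<in> {..<n} \<times> {..<n} \<Longrightarrow> \<bar>Wpre e\<bar> \<le> r \<and> \<bar>Wpost e\<bar> \<le> r" "r \<ge> 0"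
  shows "\<bar>T1 cp cm n X a b Wpre Wpost\<bar> \<le> A1 cp cm n X a b * r^2"
proof -
  define K where "K = Ks cp cm n"
  have K0: "K \<ge> 0" unfolding K_def by (rule Ks_nonneg)
  have tm: "\<bar>Wpost (j, i) *
         (X a i * sigma_s cp cm n (\<Sum>j'<n. X b j' * Wpre (j', j))
          + X b i * sigma_s cp cm n (\<Sum>j'<n. X a j' * Wpre (j', j)))\<bar>
       \<le> (\<bar>X a i\<bar> * (K * Xs X n b) + \<bar>X b i\<bar> * (K * Xs X n a)) * r^2"
    if "i < n" "j < n" for i j
  proof -
    have wr: "\<And>k. k < n \<Longrightarrow> \<bar>Wpre (k, j)\<bar> \<le> r" using assms(1) that by auto
    have s1: "\<bar>sigma_s cp cm n (\<Sum>j'<n. X b j' * Wpre (j', j))\<bar> \<le> K * Xs X n b * r"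
      unfolding K_def by (rule sig_lin_bound[where W=Wpre, OF wr])
    have s2: "\<bar>sigma_s cp cm n (\<Sum>j'<n. X a j' * Wpre (j', j))\<bar> \<le> K * Xs X n a * r"
      unfolding K_def by (rule sig_lin_bound[where W=Wpre, OF wr])
    have w: "\<bar>Wpost (j, i)\<bar> \<le> r" using assms(1) that by auto
    have "\<bar>X a i * sigma_s cp cm n (\<Sum>j'<n. X b j' * Wpre (j', j))
          + X b i * sigma_s cp cm n (\<Sum>j'<n. X a j' * Wpre (j', j))\<bar>
         \<le> \<bar>X a i\<bar> * (K * Xs X n b * r) + \<bar>X b i\<bar> * (K * Xs X n a * r)"
      by (rule order_trans[OF abs_triangle_ineq]) (auto simp: abs_mult intro!: add_mono mult_left_mono s1 s2)
    then have "\<bar>Wpost (j, i) *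
         (X a i * sigma_s cp cm n (\<Sum>j'<n. X b j' * Wpre (j', j))
          + X b i * sigma_s cp cm n (\<Sum>j'<n. X a j' * Wpre (j', j)))\<bar>
       \<le> r * (\<bar>X a i\<bar> * (K * Xs X n b * r) + \<bar>X b i\<bar> * (K * Xs X n a * r))"
      unfolding abs_mult by (intro mult_mono w) (auto simp: assms(2))
    then show ?thesis by (simp add: power2_eq_square algebra_simps)
  qed
  define cf where "cf = c_const cp cm n * sqrt (c_const cp cm n) / (real n * sqrt (real n))"
  have "\<bar>T1 cp cm n X a b Wpre Wpost\<bar> = \<bar>cf\<bar> * \<bar>\<Sum>i<n. \<Sum>j<n. Wpost (j, i) *
         (X a i * sigma_s cp cm n (\<Sum>j'<n. X b j' * Wpre (j', j))
          + X b i * sigma_s cp cm n (\<Sum>j'<n. X a j' * Wpre (j', j)))\<bar>"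
    unfolding T1_def cf_def Let_def abs_mult ..
  also have "\<dots> \<le> \<bar>cf\<bar> * (\<Sum>i<n. \<Sum>j<n. (\<bar>X a i\<bar> * (K * Xs X n b) + \<bar>X b i\<bar> * (K * Xs X n a)) * r^2)"
    by (intro mult_left_mono order_trans[OF abs_sum2] sum_mono tm) auto
  also have "\<dots> = A1 cp cm n X a b * r^2"
    unfolding A1_def cf_def K_def by (simp add: sum_distrib_right mult.assoc)
  finally show ?thesis .
qed

lemma T2_bound:
  assumes "\<And>e. e \<in> {..<n} \<times> {..<n} \<Longrightarrow> \<bar>Wpre e\<bar> \<le> r \<and> \<bar>Wpost e\<bar> \<le> r" "r \<ge> 0"
  shows "\<bar>T2 cp cm n X d w Wpre Wpost\<bar> \<le> A2 cp cm n X d w * r^4"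
proof -
  define K where "K = Ks cp cm n"
  have K0: "K \<ge> 0" unfolding K_def by (rule Ks_nonneg)
  have tm: "\<bar>Wpost (j, i) * Wpost (j', i) *
         sigma_s cp cm n (\<Sum>k<n. X d k * Wpre (k, j)) *
         sigma_s cp cm n (\<Sum>k'<n. X w k' * Wpre (k', j'))\<bar>
       \<le> ((K * Xs X n d) * (K * Xs X n w)) * r^4"
    if "i < n" "j < n" "j' < n" for i j j'
  proof -
    have s1: "\<bar>sigma_s cp cm n (\<Sum>k<n. X d k * Wpre (k, j))\<bar> \<le> K * Xs X n d * r"
      unfolding K_def by (rule sig_lin_bound) (use assms(1) that in auto)
    have s2: "\<bar>sigma_s cp cm n (\<Sum>k'<n. X w k' * Wpre (k', j'))\<bar> \<le> K * Xs X n w * r"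
      unfolding K_def by (rule sig_lin_bound) (use assms(1) that in auto)
    have w1: "\<bar>Wpost (j, i)\<bar> \<le> r" using assms(1) that by auto
    have w2: "\<bar>Wpost (j', i)\<bar> \<le> r" using assms(1) that by auto
    have "\<bar>Wpost (j, i) * Wpost (j', i) *
         sigma_s cp cm n (\<Sum>k<n. X d k * Wpre (k, j)) *
         sigma_s cp cm n (\<Sum>k'<n. X w k' * Wpre (k', j'))\<bar> \<le> r * r * (K * Xs X n d * r) * (K * Xs X n w * r)"
      unfolding abs_mult
      by (intro mult_mono w1 w2 s1 s2) (auto simp: assms(2) K0 Xs_nonneg)
    then show ?thesis by (simp add: power4_eq_xxxx algebra_simps)
  qed
  define cf where "cf = (c_const cp cm n)\<^sup>2 / ((real n)\<^sup>2 * sqrt (real n))"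
  have "\<bar>T2 cp cm n X d w Wpre Wpost\<bar> = \<bar>cf\<bar> * \<bar>\<Sum>i<n. \<Sum>j<n. \<Sum>j'<n. Wpost (j, i) * Wpost (j', i) *
         sigma_s cp cm n (\<Sum>k<n. X d k * Wpre (k, j)) *
         sigma_s cp cm n (\<Sum>k'<n. X w k' * Wpre (k', j'))\<bar>"
    unfolding T2_def cf_def Let_def abs_mult ..
  also have "\<dots> \<le> \<bar>cf\<bar> * (\<Sum>i<n. \<Sum>j<n. \<Sum>j'<n. ((K * Xs X n d) * (K * Xs X n w)) * r^4)"
    by (intro mult_left_mono order_trans[OF abs_sum3] sum_mono tm) auto
  also have "\<dots> = A2 cp cm n X d w * r^4"
    unfolding A2_def cf_def K_def by (simp add: sum_distrib_right mult.assoc)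
  finally show ?thesis .
qed



lemma T1_neg: "T1 cp cm n X a b Wpre (negI n Wpost) = - T1 cp cm n X a b Wpre Wpost"
proof -
  have "T1 cp cm n X a b Wpre (negI n Wpost) = T1 cp cm n X a b Wpre (\<lambda>e. - Wpost e)"
    unfolding T1_def Let_def
    by (intro arg_cong[where f="\<lambda>x. _ * x"] sum.cong refl) (auto simp: negI_def compose_def)
  then show ?thesis by (simp add: T1_def Let_def sum_negf)
qed

lemma T2_neg: "T2 cp cm n X d w Wpre (negI n Wpost) = T2 cp cm n X d w Wpre Wpost"
  unfolding T2_def Let_def
  by (intro arg_cong[where f="\<lambda>x. _ * x"] sum.cong refl) (auto simp: negI_def compose_def)

lemma root_bound:
  fixes x Q :: real assumes "x^6 \<le> Q" shows "\<bar>x\<bar> \<le> root 6 Q"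
proof -
  have "\<bar>x\<bar> = root 6 (\<bar>x\<bar>^6)" by (rule real_root_power_cancel[symmetric]) auto
  also have "\<dots> \<le> root 6 Q" using assms by (simp add: power_abs)
  finally show ?thesis .
qed

theorem lemmaB3:
  fixes cp cm :: real and m n :: nat and X :: "nat \<Rightarrow> nat \<Rightarrow> real"
    and a b d w :: nat
  assumes "a < m" "b < m" "d < m" "w < m"
  shows "integrable (weights n)
           (\<lambda>(Wpre, Wpost). T1 cp cm n X a b Wpre Wpost * T2 cp cm n X d w Wpre Wpost)
       \<and> (\<integral>W. (case W of (Wpre, Wpost) \<Rightarrow>
              T1 cp cm n X a b Wpre Wpost * T2 cp cm n X d w Wpre Wpost) \<partial>weights n) = 0"
proof
  define F where "F = (\<lambda>(Wpre, Wpost). T1 cp cm n X a b Wpre Wpost * T2 cp cm n X d w Wpre Wpost)"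
  define I where "I = {..<n} \<times> {..<n}"
  define Q where "Q = (\<lambda>W::(nat \<times> nat \<Rightarrow> real) \<times> (nat \<times> nat \<Rightarrow> real).
     \<Sum>e\<in>I. (fst W e)^6 + (snd W e)^6)"
  have Fm: "F \<in> borel_measurable (weights n)"
    unfolding F_def weights_def gauss_mat_def T1_def T2_def sigma_s_def Let_def
    by measurable
  have Qint: "integrable (weights n) (\<lambda>W. A1 cp cm n X a b * A2 cp cm n X d w * Q W)"
    unfolding Q_def I_def
    by (intro integrable_mult_right Bochner_Integration.integrable_sum Bochner_Integration.integrable_add w_fst w_snd)
  have bnd: "norm (F W) \<le> norm (A1 cp cm n X a b * A2 cp cm n X d w * Q W)" for W
  proof -
    obtain Wpre Wpost where W: "W = (Wpre, Wpost)" by (cases W)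
    define r where "r = root 6 (Q W)"
    have Q0: "Q W \<ge> 0" unfolding Q_def by (intro sum_nonneg) auto
    have r0: "r \<ge> 0" unfolding r_def using Q0 by simp
    have r6: "r^6 = Q W" unfolding r_def using Q0 by (simp add: real_root_pow_pos2)
    have le: "(fst W e)^6 \<le> Q W \<and> (snd W e)^6 \<le> Q W" if "e \<in> I" for e
    proof -
      have fin: "finite I" unfolding I_def by simp
      have "(fst W e)^6 + (snd W e)^6 \<le> Q W"
        unfolding Q_def by (rule member_le_sum[OF that _ fin]) auto
      moreover have "(fst W e)^6 \<ge> 0" "(snd W e)^6 \<ge> 0" by auto
      ultimately show ?thesis by linarith
    qed
    have hyp: "\<bar>Wpre e\<bar> \<le> r \<and> \<bar>Wpost e\<bar> \<le> r" if "e \<in> {..<n} \<times> {..<n}" for e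
      using le[of e] that unfolding r_def I_def W by (auto intro: root_bound)
    have A10: "A1 cp cm n X a b \<ge> 0" unfolding A1_def
      by (intro mult_nonneg_nonneg sum_nonneg add_nonneg_nonneg) (auto simp: Ks_nonneg Xs_nonneg)
    have A20: "A2 cp cm n X d w \<ge> 0" unfolding A2_def
      by (intro mult_nonneg_nonneg sum_nonneg) (auto simp: Ks_nonneg Xs_nonneg)
    have "norm (F W) = \<bar>T1 cp cm n X a b Wpre Wpost\<bar> * \<bar>T2 cp cm n X d w Wpre Wpost\<bar>"
      unfolding F_def W by (simp add: abs_mult)
    also have "\<dots> \<le> (A1 cp cm n X a b * r^2) * (A2 cp cm n X d w * r^4)"
      by (intro mult_mono T1_bound T2_bound hyp r0) (auto intro: mult_nonneg_nonneg A10)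
    also have "\<dots> = A1 cp cm n X a b * A2 cp cm n X d w * Q W"
      by (simp flip: r6 add: algebra_simps power_add[symmetric])
    also have "\<dots> \<le> norm (A1 cp cm n X a b * A2 cp cm n X d w * Q W)" by simp
    finally show ?thesis .
  qed
  have Fint: "integrable (weights n) F"
    by (rule Bochner_Integration.integrable_bound[OF Qint Fm]) (rule AE_I2, rule bnd)
  then show "integrable (weights n) (\<lambda>(Wpre, Wpost). T1 cp cm n X a b Wpre Wpost * T2 cp cm n X d w Wpre Wpost)"
    unfolding F_def .
  have neg: "F (sigW n W) = - F W" for W
    by (cases W) (simp add: F_def sigW_def T1_neg T2_neg)
  have "integral\<^sup>L (weights n) F = integral\<^sup>L (distr (weights n) (weights n) (sigW n)) F"
    by (simp add: weights_sym)
  also have "\<dots> = integral\<^sup>L (weights n) (\<lambda>W. F (sigW n W))"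
    by (rule integral_distr[OF sigW_meas Fm])
  also have "\<dots> = - integral\<^sup>L (weights n) F" by (simp add: neg)
  finally have "integral\<^sup>L (weights n) F = 0" by simp
  then show "(\<integral>W. (case W of (Wpre, Wpost) \<Rightarrow>
              T1 cp cm n X a b Wpre Wpost * T2 cp cm n X d w Wpre Wpost) \<partial>weights n) = 0"
    unfolding F_def .
qed


end
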